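(* Let $H\in\mathbb{R}^{n\times n}$ be a $\mu$-incoherent symmetric positive semi-definite matrix, and let $H=(\grave U+I)D(\grave U+I)^T$ be its LDL decomposition, with $\grave U$ strictly upper triangular and $D$ diagonal with nonnegative entries. Then $$\operatorname{tr}(D)\le\frac{\mu^2}{n}\operatorname{tr}(H^{1/2})^2.$$
   Context: A symmetric matrix $H\in\mathbb{R}^{n\times n}$ is $\mu$-incoherent if it has an eigendecomposition $H=Q\Lambda Q^T$ ($Q$ orthogonal, $\Lambda$ diagonal) such that $|Q_{ij}|\le\mu/\sqrt{n}$ for all $i,j$. $H^{1/2}$ denotes the positive semi-definite square root. *)

theory Defs
  imports "Jordan_Normal_Form.Matrix"
begin

definition mtrace :: "real mat \<Rightarrow> real" where
  "mtrace A = (\<Sum>i<dim_row A. A $$ (i,i))"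

definition symmetric_mat :: "real mat \<Rightarrow> bool" where
  "symmetric_mat A \<longleftrightarrow> transpose_mat A = A"

definition psd_mat :: "nat \<Rightarrow> real mat \<Rightarrow> bool" where
  "psd_mat n A \<longleftrightarrow> A \<in> carrier_mat n n \<and> symmetric_mat A \<and>
     (\<forall>x \<in> carrier_vec n. 0 \<le> x \<bullet> (A *\<^sub>v x))"

definition orthogonal_real_mat :: "nat \<Rightarrow> real mat \<Rightarrow> bool" where
  "orthogonal_real_mat n Q \<longleftrightarrow> Q \<in> carrier_mat n n \<and> transpose_mat Q * Q = 1\<^sub>m n"

definition incoherent :: "nat \<Rightarrow> real \<Rightarrow> real mat \<Rightarrow> bool" where
  "incoherent n \<mu> H \<longleftrightarrow> symmetric_mat H \<and>
     (\<exists>Q \<Lambda>. orthogonal_real_mat n Q \<and> \<Lambda> \<in> carrier_mat n n \<and> diagonal_mat \<Lambda> \<and>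
        H = Q * \<Lambda> * transpose_mat Q \<and>
        (\<forall>i<n. \<forall>j<n. \<bar>Q $$ (i,j)\<bar> \<le> \<mu> / sqrt (real n)))"

definition psd_sqrt :: "nat \<Rightarrow> real mat \<Rightarrow> real mat" where
  "psd_sqrt n H = (THE S. psd_mat n S \<and> S * S = H)"

definition strictly_upper_triangular :: "real mat \<Rightarrow> bool" where
  "strictly_upper_triangular U \<longleftrightarrow>
     (\<forall>i<dim_row U. \<forall>j<dim_col U. j \<le> i \<longrightarrow> U $$ (i,j) = 0)"

end

theory Submission
  imports Defs "Jordan_Normal_Form.Determinant"
begin


lemma mm_entry:
  fixes A B :: "real mat"
  assumes "A \<in> carrier_mat n n" "B \<in> carrier_mat n n" "i < n" "j < n"
  shows "(A * B) $$ (i,j) = (\<Sum>k<n. A $$ (i,k) * B $$ (k,j))"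
  using assms by (simp add: scalar_prod_def lessThan_atLeast0)

lemma mm_diag_entry:
  fixes A B C :: "real mat"
  assumes "A \<in> carrier_mat n n" "B \<in> carrier_mat n n" "C \<in> carrier_mat n n" "i < n" "j < n"
    and "diagonal_mat B"
  shows "(A * B * C) $$ (i,j) = (\<Sum>k<n. A $$ (i,k) * B $$ (k,k) * C $$ (k,j))"
proof -
  have "(A * B * C) $$ (i,j) = (\<Sum>k<n. (A*B) $$ (i,k) * C $$ (k,j))"
    using assms by (intro mm_entry) auto
  also have "\<dots> = (\<Sum>k<n. A $$ (i,k) * B $$ (k,k) * C $$ (k,j))"
  proof (intro sum.cong refl)
    fix k assume k: "k \<in> {..<n}"
    have "(A*B) $$ (i,k) = (\<Sum>m<n. A $$ (i,m) * B $$ (m,k))"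
      using assms k by (intro mm_entry) auto
    also have "\<dots> = (\<Sum>m<n. if m = k then A $$ (i,m) * B $$ (m,k) else 0)"
      using assms k unfolding diagonal_mat_def by (intro sum.cong refl) auto
    also have "\<dots> = A $$ (i,k) * B $$ (k,k)" using k by simp
    finally show "(A*B) $$ (i,k) * C $$ (k,j) = A $$ (i,k) * B $$ (k,k) * C $$ (k,j)" by simp
  qed
  finally show ?thesis .
qed

lemma quad_form:
  fixes A :: "real mat" and x :: "real vec"
  assumes "A \<in> carrier_mat n n" "x \<in> carrier_vec n"
  shows "x \<bullet> (A *\<^sub>v x) = (\<Sum>i<n. x $ i * (\<Sum>j<n. A $$ (i,j) * x $ j))"
  using assms by (simp add: scalar_prod_def lessThan_atLeast0)

lemma QQt:
  fixes Q :: "real mat"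
  assumes "orthogonal_real_mat n Q"
  shows "Q * transpose_mat Q = 1\<^sub>m n"
  using assms unfolding orthogonal_real_mat_def
  by (intro mat_mult_left_right_inverse[of "transpose_mat Q" n Q]) auto



lemma wcs:
  fixes a x :: "nat \<Rightarrow> real"
  assumes "\<forall>j<n. 0 \<le> a j"
  shows "(\<Sum>j<n. a j * x j)\<^sup>2 \<le> (\<Sum>j<n. a j) * (\<Sum>j<n. a j * (x j)\<^sup>2)"
proof -
  let ?A = "\<Sum>j<n. a j" and ?B = "\<Sum>j<n. a j * (x j)\<^sup>2" and ?C = "\<Sum>j<n. a j * x j"
  have "0 \<le> (\<Sum>i<n. \<Sum>j<n. a i * a j * (x i - x j)\<^sup>2)"
    using assms by (intro sum_nonneg) auto
  also have "\<dots> = (\<Sum>i<n. \<Sum>j<n. (a i * (x i)\<^sup>2) * a j + a i * (a j * (x j)\<^sup>2) - 2 * ((a i * x i) * (a j * x j)))"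
    by (intro sum.cong refl) (simp add: power2_eq_square algebra_simps)
  also have "\<dots> = (\<Sum>i<n. (a i * (x i)\<^sup>2) * ?A + a i * ?B - 2 * ((a i * x i) * ?C))"
    by (simp only: sum_subtractf sum.distrib sum_distrib_left)
  also have "\<dots> = (\<Sum>i<n. (a i * (x i)\<^sup>2)) * ?A + (\<Sum>i<n. a i) * ?B - (\<Sum>i<n. a i * x i) * (2 * ?C)"
    by (simp only: sum_subtractf sum.distrib sum_distrib_right mult.assoc mult.left_commute[of 2])
  finally show ?thesis by (simp add: power2_eq_square)
qed

lemma bessel:
  fixes n :: nat and lam d :: "nat \<Rightarrow> real" and R :: "nat\<Rightarrow>nat\<Rightarrow>real"
  assumes lam: "\<forall>j<n. 0 \<le> lam j"
    and orth: "\<forall>k<n. \<forall>l<n. (\<Sum>j<n. R k j * lam j * R l j) = (if k = l then d k else 0)"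
    and i: "i < n"
  shows "lam i * (\<Sum>k\<in>{k. k<n \<and> 0 < d k}. (R k i)\<^sup>2 / d k) \<le> 1"
proof -
  define K where "K = {k. k<n \<and> 0 < d k}"
  have fK: "finite K" and Kn: "K \<subseteq> {..<n}" unfolding K_def by auto
  define s where "s = (\<Sum>k\<in>K. (R k i)\<^sup>2 / d k)"
  define z where "z j = (\<Sum>k\<in>K. R k j * (R k i / d k))" for j
  have s0: "0 \<le> s" unfolding s_def K_def by (intro sum_nonneg) auto
  have zi: "z i = s" unfolding z_def s_def by (intro sum.cong refl) (simp add: power2_eq_square)
  have "(\<Sum>j<n. lam j * (z j)\<^sup>2) = (\<Sum>j<n. \<Sum>k\<in>K. \<Sum>l\<in>K. (R k i / d k) * (R l i / d l) * (R k j * lam j * R l j))"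
  proof (intro sum.cong refl)
    fix j
    have "lam j * (z j)\<^sup>2 = (\<Sum>k\<in>K. \<Sum>l\<in>K. lam j * ((R k j * (R k i / d k)) * (R l j * (R l i / d l))))"
      unfolding power2_eq_square z_def sum_product by (simp only: sum_distrib_left)
    also have "\<dots> = (\<Sum>k\<in>K. \<Sum>l\<in>K. (R k i / d k) * (R l i / d l) * (R k j * lam j * R l j))"
      by (intro sum.cong refl) (simp only: mult_ac)
    finally show "lam j * (z j)\<^sup>2 = \<dots>" .
  qed
  also have "\<dots> = (\<Sum>k\<in>K. \<Sum>l\<in>K. (R k i / d k) * (R l i / d l) * (\<Sum>j<n. R k j * lam j * R l j))"
    unfolding sum_distrib_left
    by (rule trans[OF sum.swap], rule sum.cong[OF refl], rule sum.swap)
  also have "\<dots> = (\<Sum>k\<in>K. \<Sum>l\<in>K. (R k i / d k) * (R l i / d l) * (if k = l then d k else 0))"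
    using orth Kn by (intro sum.cong refl) (auto simp: subset_iff)
  also have "\<dots> = s"
  proof -
    have "(\<Sum>l\<in>K. (R k i / d k) * (R l i / d l) * (if k = l then d k else 0)) = (R k i)\<^sup>2 / d k"
      if "k \<in> K" for k
    proof -
      have "(\<Sum>l\<in>K. (R k i / d k) * (R l i / d l) * (if k = l then d k else 0))
          = (\<Sum>l\<in>K. if k = l then (R k i / d k) * (R l i / d l) * d k else 0)"
        by (intro sum.cong refl) auto
      also have "\<dots> = (R k i / d k) * (R k i / d k) * d k" using fK that by simp
      also have "\<dots> = (R k i)\<^sup>2 / d k" using that by (simp add: K_def power2_eq_square)
      finally show ?thesis .
    qed
    then show ?thesis unfolding s_def by (intro sum.cong refl) auto
  qed
  finally have eq: "(\<Sum>j<n. lam j * (z j)\<^sup>2) = s" .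
  have "lam i * (z i)\<^sup>2 \<le> (\<Sum>j<n. lam j * (z j)\<^sup>2)"
    using i lam by (intro member_le_sum[of i "{..<n}" "\<lambda>j. lam j * (z j)\<^sup>2"]) auto
  then have "lam i * s * s \<le> s" using eq zi by (simp add: power2_eq_square mult.assoc)
  then have "lam i * s \<le> 1" using s0
    by (cases "s = 0") (auto simp: mult_le_cancel_right1)
  then show ?thesis unfolding s_def K_def .
qed


lemma key_scalar:
  fixes n :: nat and lam d :: "nat \<Rightarrow> real" and R Q :: "nat\<Rightarrow>nat\<Rightarrow>real" and c :: real
  assumes lam: "\<forall>j<n. 0 \<le> lam j" and dnn: "\<forall>k<n. 0 \<le> d k"
    and orth: "\<forall>k<n. \<forall>l<n. (\<Sum>j<n. R k j * lam j * R l j) = (if k = l then d k else 0)"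
    and dk: "\<forall>k<n. d k = (\<Sum>j<n. R k j * lam j * Q k j)"
    and Qb: "\<forall>k<n. \<forall>j<n. \<bar>Q k j\<bar> \<le> c"
  shows "(\<Sum>k<n. d k) \<le> c\<^sup>2 * (\<Sum>j<n. sqrt (lam j))\<^sup>2"
proof -
  define K where "K = {k. k<n \<and> 0 < d k}"
  define a where "a j = sqrt (lam j)" for j
  define A where "A = (\<Sum>j<n. a j)"
  have fK: "finite K" and Kn: "K \<subseteq> {..<n}" unfolding K_def by auto
  have a0: "\<forall>j<n. 0 \<le> a j" unfolding a_def using lam by auto
  have aa: "a j * a j = lam j" if "j < n" for j using lam that unfolding a_def
    by (simp add: real_sqrt_mult_self) 
  have A0: "0 \<le> A" unfolding A_def using a0 by (intro sum_nonneg) auto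
  have B: "d k \<le> c\<^sup>2 * A * ((\<Sum>j<n. a j * (lam j * (R k j)\<^sup>2)) / d k)" if k: "k \<in> K" for k
  proof -
    have kn: "k < n" and dpos: "0 < d k" using k unfolding K_def by auto
    have c0: "0 \<le> c" using Qb kn by (meson abs_ge_zero order_trans)
    have "d k \<le> (\<Sum>j<n. \<bar>R k j * lam j * Q k j\<bar>)" using dk kn by (simp add: sum_mono)
    also have "\<dots> \<le> (\<Sum>j<n. c * (a j * (a j * \<bar>R k j\<bar>)))"
    proof (intro sum_mono)
      fix j assume "j \<in> {..<n}"
      then have j: "j < n" by auto
      have "\<bar>R k j * lam j * Q k j\<bar> = (\<bar>R k j\<bar> * lam j) * \<bar>Q k j\<bar>"
        using lam j by (simp add: abs_mult)
      also have "\<dots> \<le> (\<bar>R k j\<bar> * lam j) * c"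
        using Qb kn j lam by (intro mult_left_mono) auto
      also have "\<dots> = c * (a j * (a j * \<bar>R k j\<bar>))"
        by (subst aa[OF j, symmetric]) (simp only: mult_ac)
      finally show "\<bar>R k j * lam j * Q k j\<bar> \<le> c * (a j * (a j * \<bar>R k j\<bar>))" .
    qed
    also have "\<dots> = c * (\<Sum>j<n. a j * (a j * \<bar>R k j\<bar>))" by (simp add: sum_distrib_left)
    finally have d1: "d k \<le> c * (\<Sum>j<n. a j * (a j * \<bar>R k j\<bar>))" .
    have "(\<Sum>j<n. a j * (a j * \<bar>R k j\<bar>))\<^sup>2 \<le> A * (\<Sum>j<n. a j * (a j * \<bar>R k j\<bar>)\<^sup>2)"
      unfolding A_def by (rule wcs[OF a0])
    also have "(\<Sum>j<n. a j * (a j * \<bar>R k j\<bar>)\<^sup>2) = (\<Sum>j<n. a j * (lam j * (R k j)\<^sup>2))"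
      by (intro sum.cong refl) (simp add: power_mult_distrib aa[symmetric] power2_eq_square)
    finally have d2: "(\<Sum>j<n. a j * (a j * \<bar>R k j\<bar>))\<^sup>2 \<le> A * (\<Sum>j<n. a j * (lam j * (R k j)\<^sup>2))" .
    have "d k * d k \<le> (c * (\<Sum>j<n. a j * (a j * \<bar>R k j\<bar>)))\<^sup>2"
      using d1 dpos by (simp add: power2_eq_square mult_mono')
    also have "\<dots> = c\<^sup>2 * (\<Sum>j<n. a j * (a j * \<bar>R k j\<bar>))\<^sup>2" by (simp add: power_mult_distrib)
    also have "\<dots> \<le> c\<^sup>2 * (A * (\<Sum>j<n. a j * (lam j * (R k j)\<^sup>2)))"
      using d2 by (intro mult_left_mono) auto
    finally have "d k * d k \<le> c\<^sup>2 * A * (\<Sum>j<n. a j * (lam j * (R k j)\<^sup>2))" by (simp add: mult_ac)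
    then show ?thesis using dpos by (simp add: pos_le_divide_eq)
  qed
  have "(\<Sum>k<n. d k) = (\<Sum>k\<in>K. d k)"
    using dnn by (intro sum.mono_neutral_right) (auto simp: K_def)
  also have "\<dots> \<le> (\<Sum>k\<in>K. c\<^sup>2 * A * ((\<Sum>j<n. a j * (lam j * (R k j)\<^sup>2)) / d k))"
    using B by (intro sum_mono) auto
  also have "\<dots> = c\<^sup>2 * A * (\<Sum>j<n. a j * (lam j * (\<Sum>k\<in>K. (R k j)\<^sup>2 / d k)))"
    by (simp add: sum_distrib_left sum_divide_distrib mult.assoc sum.swap[of _ K])
  also have "\<dots> \<le> c\<^sup>2 * A * (\<Sum>j<n. a j * 1)"
  proof -
    have "a j * (lam j * (\<Sum>k\<in>K. (R k j)\<^sup>2 / d k)) \<le> a j * 1" if "j \<in> {..<n}" for j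
      using bessel[OF lam orth, of j] a0 that unfolding K_def by (intro mult_left_mono) auto
    then have "(\<Sum>j<n. a j * (lam j * (\<Sum>k\<in>K. (R k j)\<^sup>2 / d k))) \<le> (\<Sum>j<n. a j * 1)"
      by (rule sum_mono)
    then show ?thesis using A0 by (intro mult_left_mono) auto
  qed
  also have "\<dots> = c\<^sup>2 * (\<Sum>j<n. sqrt (lam j))\<^sup>2" unfolding A_def a_def by (simp add: power2_eq_square)
  finally show ?thesis .
qed



lemma delta_L1:
  fixes f :: "nat \<Rightarrow> real"
  assumes "i < n"
  shows "(\<Sum>m<n. (if i = m then a else 0) * f m) = a * f i"
proof -
  have "(\<Sum>m<n. (if i = m then a else 0) * f m) = (\<Sum>m<n. if m = i then a * f m else 0)"
    by (intro sum.cong) auto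
  then show ?thesis using assms by simp
qed

lemma delta_L2:
  fixes f a :: "nat \<Rightarrow> real"
  assumes "i < n"
  shows "(\<Sum>m<n. f m * (if m = i then a m else 0)) = f i * a i"
proof -
  have "(\<Sum>m<n. f m * (if m = i then a m else 0)) = (\<Sum>m<n. if m = i then f m * a m else 0)"
    by (intro sum.cong) auto
  then show ?thesis using assms by simp
qed

lemma sqrt_scalar:
  fixes n :: nat and l :: "nat \<Rightarrow> real" and t :: "nat \<Rightarrow> nat \<Rightarrow> real"
  assumes l0: "\<forall>i<n. 0 \<le> l i"
    and e1: "\<forall>i<n. \<forall>j<n. (\<Sum>k<n. t i k * t k j) = (if i = j then l i else 0)"
    and e2: "\<forall>i<n. \<forall>j<n. t i j = t j i"
    and e3: "\<And>g. 0 \<le> (\<Sum>i<n. g i * (\<Sum>j<n. t i j * g j))"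
    and c: "c < n" and m: "m < n"
  shows "t m c = (if m = c then sqrt (l m) else 0)"
proof -
  define nn where "nn i = sqrt (l i)" for i
  define N where "N i j = (if i = j then nn i else 0)" for i j
  have nn2: "nn i * nn i = l i" if "i < n" for i using l0 that unfolding nn_def by simp
  have nn0: "0 \<le> nn i" if "i < n" for i using l0 that unfolding nn_def by simp
  have comm: "t i j * l j = l i * t i j" if i: "i < n" and j: "j < n" for i j
  proof -
    have "(\<Sum>k<n. t i k * (\<Sum>m<n. t k m * t m j)) = (\<Sum>k<n. \<Sum>m<n. t i k * t k m * t m j)"
      by (simp only: sum_distrib_left mult.assoc)
    also have "\<dots> = (\<Sum>m<n. \<Sum>k<n. t i k * t k m * t m j)" by (rule sum.swap)
    also have "\<dots> = (\<Sum>m<n. (\<Sum>k<n. t i k * t k m) * t m j)" by (simp only: sum_distrib_right)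
    also have "\<dots> = (\<Sum>m<n. (if i = m then l i else 0) * t m j)"
      using e1 i by (intro sum.cong refl) auto
    also have "\<dots> = l i * t i j" using i by (rule delta_L1)
    finally have 1: "(\<Sum>k<n. t i k * (\<Sum>m<n. t k m * t m j)) = l i * t i j" .
    have "(\<Sum>k<n. t i k * (\<Sum>m<n. t k m * t m j)) = (\<Sum>k<n. t i k * (if k = j then l k else 0))"
      using e1 j by (intro sum.cong refl) auto
    also have "\<dots> = t i j * l j" using j by (rule delta_L2)
    finally show ?thesis using 1 by auto
  qed
  have comm': "t i j * nn j = nn i * t i j" if i: "i < n" and j: "j < n" for i j
  proof (cases "t i j = 0")
    case False
    then have "l i = l j" using comm[OF i j] by (simp add: mult.commute)
    then show ?thesis unfolding nn_def by (simp add: mult.commute)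
  qed simp
  define g where "g i = t i c - N i c" for i
  have Fg: "(\<Sum>j<n. (t i j + N i j) * g j) = 0" if i: "i < n" for i
  proof -
    have "(\<Sum>j<n. (t i j + N i j) * g j) =
        (\<Sum>j<n. t i j * t j c) - (\<Sum>j<n. t i j * N j c) + (\<Sum>j<n. N i j * t j c) - (\<Sum>j<n. N i j * N j c)"
      unfolding g_def by (simp only: distrib_right right_diff_distrib sum.distrib sum_subtractf diff_add_eq add_diff_eq)
    also have "(\<Sum>j<n. t i j * N j c) = t i c * nn c" unfolding N_def using c
      by (rule delta_L2)
    also have "(\<Sum>j<n. N i j * t j c) = nn i * t i c" unfolding N_def using i
      by (rule delta_L1)
    also have "(\<Sum>j<n. N i j * N j c) = nn i * N i c" unfolding N_def using i
      by (rule delta_L1)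
    also have "nn i * N i c = (if i = c then l i else 0)" unfolding N_def using nn2[OF i] by auto
    finally show ?thesis using e1 i c comm'[OF i c] by simp
  qed
  have "(\<Sum>i<n. g i * (\<Sum>j<n. t i j * g j)) + (\<Sum>i<n. nn i * (g i)\<^sup>2) =
      (\<Sum>i<n. g i * (\<Sum>j<n. (t i j + N i j) * g j))"
  proof -
    have "(\<Sum>j<n. N i j * g j) = nn i * g i" if "i < n" for i
      unfolding N_def using that by (rule delta_L1)
    then have "(\<Sum>i<n. g i * (\<Sum>j<n. (t i j + N i j) * g j)) = (\<Sum>i<n. g i * (\<Sum>j<n. t i j * g j) + nn i * (g i)\<^sup>2)"
      by (intro sum.cong refl) (simp add: distrib_right sum.distrib distrib_left power2_eq_square mult_ac)
    then show ?thesis by (simp only: sum.distrib)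
  qed
  also have "\<dots> = 0" using Fg by simp
  finally have eq0: "(\<Sum>i<n. g i * (\<Sum>j<n. t i j * g j)) + (\<Sum>i<n. nn i * (g i)\<^sup>2) = 0" .
  have p2: "0 \<le> (\<Sum>i<n. nn i * (g i)\<^sup>2)" using nn0 by (intro sum_nonneg) auto
  have "(\<Sum>i<n. nn i * (g i)\<^sup>2) = 0" using eq0 p2 e3[of g] by linarith
  then have z: "\<forall>i\<in>{..<n}. nn i * (g i)\<^sup>2 = 0" using nn0
    by (subst sum_nonneg_eq_0_iff[symmetric]) auto
  have "g m = 0"
  proof (cases "l m = 0")
    case False
    then have "nn m \<noteq> 0" using l0 m unfolding nn_def by auto
    then show ?thesis using z m by auto
  next
    case True
    have "(\<Sum>k<n. (t m k)\<^sup>2) = (\<Sum>k<n. t m k * t k m)"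
      using e2 m by (intro sum.cong refl) (auto simp: power2_eq_square)
    also have "\<dots> = 0" using e1 m True by simp
    finally have "(\<Sum>k<n. (t m k)\<^sup>2) = 0" .
    then have "\<forall>k\<in>{..<n}. (t m k)\<^sup>2 = 0" by (subst sum_nonneg_eq_0_iff[symmetric]) auto
    then have "t m c = 0" using c by auto
    moreover have "N m c = 0" unfolding N_def nn_def using True by auto
    ultimately show ?thesis unfolding g_def by simp
  qed
  then show ?thesis unfolding g_def N_def nn_def by simp
qed


lemma mult_nn: "(A::real mat) \<in> carrier_mat n n \<Longrightarrow> B \<in> carrier_mat n n \<Longrightarrow> A * B \<in> carrier_mat n n"
  by simp

lemma tr_nn: "(A::real mat) \<in> carrier_mat n n \<Longrightarrow> transpose_mat A \<in> carrier_mat n n"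
  by simp

lemma assoc_nn: "(A::real mat) \<in> carrier_mat n n \<Longrightarrow> B \<in> carrier_mat n n \<Longrightarrow> C \<in> carrier_mat n n
  \<Longrightarrow> A * B * C = A * (B * C)"
  by simp

lemma QtQX:
  fixes Q X :: "real mat"
  assumes "orthogonal_real_mat n Q" "X \<in> carrier_mat n k"
  shows "transpose_mat Q * (Q * X) = X"
proof -
  have Q: "Q \<in> carrier_mat n n" and 1: "transpose_mat Q * Q = 1\<^sub>m n"
    using assms unfolding orthogonal_real_mat_def by auto
  have "transpose_mat Q * (Q * X) = (transpose_mat Q * Q) * X" using Q assms by simp
  then show ?thesis using 1 assms by simp
qed

lemma QQtX:
  fixes Q X :: "real mat"
  assumes "orthogonal_real_mat n Q" "X \<in> carrier_mat n k"
  shows "Q * (transpose_mat Q * X) = X"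
proof -
  have Q: "Q \<in> carrier_mat n n" using assms unfolding orthogonal_real_mat_def by auto
  have "Q * (transpose_mat Q * X) = (Q * transpose_mat Q) * X" using Q assms by simp
  then show ?thesis using QQt[OF assms(1)] assms by simp
qed

lemma psd_sqrt_trace:
  fixes Q \<Lambda> H :: "real mat"
  assumes Qo: "orthogonal_real_mat n Q" and Lc: "\<Lambda> \<in> carrier_mat n n" and Ld: "diagonal_mat \<Lambda>"
    and L0: "\<forall>i<n. 0 \<le> \<Lambda> $$ (i,i)" and H: "H = Q * \<Lambda> * transpose_mat Q"
  shows "mtrace (psd_sqrt n H) = (\<Sum>i<n. sqrt (\<Lambda> $$ (i,i)))"
proof -
  define N where "N = mat n n (\<lambda>(i,j). if i = j then sqrt (\<Lambda> $$ (i,i)) else 0)"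
  define S0 where "S0 = Q * N * transpose_mat Q"
  have Qc: "Q \<in> carrier_mat n n" using Qo unfolding orthogonal_real_mat_def by auto
  have QtQ: "transpose_mat Q * Q = 1\<^sub>m n" using Qo unfolding orthogonal_real_mat_def by auto
  have Nc: "N \<in> carrier_mat n n" unfolding N_def by simp
  have Nd: "diagonal_mat N" unfolding N_def diagonal_mat_def by simp
  have Nij: "N $$ (i,j) = (if i = j then sqrt (\<Lambda> $$ (i,i)) else 0)" if "i<n" "j<n" for i j
    unfolding N_def using that by simp
  have S0c: "S0 \<in> carrier_mat n n" unfolding S0_def using Qc Nc by (simp add: assoc_nn[of _ n] mult_nn tr_nn)
  have S0e: "S0 $$ (i,j) = (\<Sum>k<n. Q $$ (i,k) * N $$ (k,k) * Q $$ (j,k))" if i: "i < n" and j: "j < n" for i j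
  proof -
    have "S0 $$ (i,j) = (\<Sum>k<n. Q $$ (i,k) * N $$ (k,k) * transpose_mat Q $$ (k,j))"
      unfolding S0_def by (rule mm_diag_entry[OF Qc Nc tr_nn[OF Qc] i j Nd])
    also have "\<dots> = (\<Sum>k<n. Q $$ (i,k) * N $$ (k,k) * Q $$ (j,k))"
      using Qc j by (intro sum.cong refl) simp
    finally show ?thesis .
  qed
  have NN: "N * N = \<Lambda>"
  proof (rule eq_matI)
    fix i j assume "i < dim_row \<Lambda>" "j < dim_col \<Lambda>"
    then have i: "i < n" and j: "j < n" using Lc by auto
    have "(N * N) $$ (i,j) = (\<Sum>k<n. N $$ (i,k) * N $$ (k,j))" by (rule mm_entry[OF Nc Nc i j])
    also have "\<dots> = (\<Sum>k<n. (if i = k then sqrt (\<Lambda> $$ (i,i)) else 0) * N $$ (k,j))"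
      using i by (intro sum.cong refl) (simp add: Nij)
    also have "\<dots> = sqrt (\<Lambda> $$ (i,i)) * N $$ (i,j)" using i by (rule delta_L1)
    also have "\<dots> = \<Lambda> $$ (i,j)" using i j L0 Ld Lc unfolding diagonal_mat_def by (auto simp: Nij)
    finally show "(N * N) $$ (i,j) = \<Lambda> $$ (i,j)" .
  qed (use Nc Lc in auto)
  have S0S0: "S0 * S0 = H"
  proof -
    have "S0 * S0 = Q * (N * (transpose_mat Q * (Q * (N * transpose_mat Q))))"
      unfolding S0_def using Qc Nc by (simp add: assoc_nn[of _ n] mult_nn tr_nn)
    also have "\<dots> = Q * (N * N) * transpose_mat Q"
      using Qc Nc by (simp add: QtQX[OF Qo, of _ n] assoc_nn[of _ n] mult_nn tr_nn)
    finally show ?thesis using NN H by simp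
  qed
  have S0psd: "psd_mat n S0"
    unfolding psd_mat_def
  proof (intro conjI ballI)
    show "S0 \<in> carrier_mat n n" by (rule S0c)
    have "transpose_mat N = N" using Nc by (intro eq_matI) (auto simp: Nij)
    then show "symmetric_mat S0" unfolding symmetric_mat_def S0_def using Qc Nc
      by (simp add: transpose_mult[of _ n n _ n])
    fix x :: "real vec" assume x: "x \<in> carrier_vec n"
    have "x \<bullet> (S0 *\<^sub>v x) = (\<Sum>i<n. x $ i * (\<Sum>j<n. S0 $$ (i,j) * x $ j))" using S0c x by (rule quad_form)
    also have "\<dots> = (\<Sum>i<n. x $ i * (\<Sum>j<n. (\<Sum>k<n. Q $$ (i,k) * N $$ (k,k) * Q $$ (j,k)) * x $ j))"
      by (intro sum.cong refl) (simp add: S0e)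
    also have "\<dots> = (\<Sum>k<n. N $$ (k,k) * (\<Sum>i<n. x $ i * Q $$ (i,k))\<^sup>2)"
    proof -
      have "(\<Sum>i<n. x $ i * (\<Sum>j<n. (\<Sum>k<n. Q $$ (i,k) * N $$ (k,k) * Q $$ (j,k)) * x $ j))
          = (\<Sum>i<n. \<Sum>j<n. \<Sum>k<n. N $$ (k,k) * ((x $ i * Q $$ (i,k)) * (x $ j * Q $$ (j,k))))"
      proof (intro sum.cong refl)
        fix i
        have "x $ i * (\<Sum>j<n. (\<Sum>k<n. Q $$ (i,k) * N $$ (k,k) * Q $$ (j,k)) * x $ j)
           = (\<Sum>j<n. \<Sum>k<n. x $ i * (Q $$ (i,k) * N $$ (k,k) * Q $$ (j,k) * x $ j))"
          by (simp only: sum_distrib_left sum_distrib_right)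
        also have "\<dots> = (\<Sum>j<n. \<Sum>k<n. N $$ (k,k) * ((x $ i * Q $$ (i,k)) * (x $ j * Q $$ (j,k))))"
          by (intro sum.cong refl) (simp only: mult_ac)
        finally show "x $ i * (\<Sum>j<n. (\<Sum>k<n. Q $$ (i,k) * N $$ (k,k) * Q $$ (j,k)) * x $ j)
           = (\<Sum>j<n. \<Sum>k<n. N $$ (k,k) * ((x $ i * Q $$ (i,k)) * (x $ j * Q $$ (j,k))))" .
      qed
      also have "\<dots> = (\<Sum>i<n. \<Sum>k<n. \<Sum>j<n. N $$ (k,k) * ((x $ i * Q $$ (i,k)) * (x $ j * Q $$ (j,k))))"
        by (rule sum.cong[OF refl], rule sum.swap)
      also have "\<dots> = (\<Sum>k<n. \<Sum>i<n. \<Sum>j<n. N $$ (k,k) * ((x $ i * Q $$ (i,k)) * (x $ j * Q $$ (j,k))))"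
        by (rule sum.swap)
      also have "\<dots> = (\<Sum>k<n. N $$ (k,k) * (\<Sum>i<n. x $ i * Q $$ (i,k))\<^sup>2)"
        unfolding power2_eq_square sum_product by (simp only: sum_distrib_left)
      finally show ?thesis .
    qed
    also have "\<dots> \<ge> 0" using L0 by (intro sum_nonneg mult_nonneg_nonneg) (auto simp: Nij)
    finally show "0 \<le> x \<bullet> (S0 *\<^sub>v x)" .
  qed
  have uniq: "S = S0" if Sp: "psd_mat n S" and SS: "S * S = H" for S
  proof -
    have Sc: "S \<in> carrier_mat n n" and Ssym: "transpose_mat S = S"
      and Spsd: "\<forall>x\<in>carrier_vec n. 0 \<le> x \<bullet> (S *\<^sub>v x)"
      using Sp unfolding psd_mat_def symmetric_mat_def by auto
    define T where "T = transpose_mat Q * S * Q"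
    have Tc: "T \<in> carrier_mat n n" unfolding T_def using Qc Sc by (simp add: assoc_nn[of _ n] mult_nn tr_nn)
    have TT: "T * T = \<Lambda>"
    proof -
      have "T * T = transpose_mat Q * (S * (Q * (transpose_mat Q * (S * Q))))"
        unfolding T_def using Qc Sc by (simp add: assoc_nn[of _ n] mult_nn tr_nn)
      also have "\<dots> = transpose_mat Q * ((S * S) * Q)" using Qc Sc by (simp add: QQtX[OF Qo, of _ n] assoc_nn[of _ n] mult_nn tr_nn)
      also have "\<dots> = transpose_mat Q * (Q * (\<Lambda> * (transpose_mat Q * Q)))"
        unfolding SS H using Qc Lc by (simp add: assoc_nn[of _ n] mult_nn tr_nn)
      also have "\<dots> = \<Lambda>" using Qc Lc QtQ by (simp add: QtQX[OF Qo, of _ n] assoc_nn[of _ n] mult_nn tr_nn)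
      finally show ?thesis .
    qed
    have ST: "S = Q * T * transpose_mat Q"
    proof -
      have "Q * T * transpose_mat Q = Q * (transpose_mat Q * (S * (Q * transpose_mat Q)))"
        unfolding T_def using Qc Sc by (simp add: assoc_nn[of _ n] mult_nn tr_nn)
      also have "\<dots> = S" using Qc Sc by (simp add: QQt[OF Qo] QQtX[OF Qo, of _ n] assoc_nn[of _ n] mult_nn tr_nn)
      finally show ?thesis by simp
    qed
    have Tsym: "transpose_mat T = T"
      unfolding T_def using Qc Sc Ssym by (simp add: transpose_mult[of _ n n _ n])
    have e1: "\<forall>i<n. \<forall>j<n. (\<Sum>k<n. T $$ (i,k) * T $$ (k,j)) = (if i = j then \<Lambda> $$ (i,i) else 0)"
    proof (intro allI impI)
      fix i j assume i: "i < n" and j: "j < n"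
      have "(\<Sum>k<n. T $$ (i,k) * T $$ (k,j)) = (T * T) $$ (i,j)" by (rule mm_entry[OF Tc Tc i j, symmetric])
      then show "(\<Sum>k<n. T $$ (i,k) * T $$ (k,j)) = (if i = j then \<Lambda> $$ (i,i) else 0)"
        using TT Ld Lc i j unfolding diagonal_mat_def by auto
    qed
    have e2: "\<forall>i<n. \<forall>j<n. T $$ (i,j) = T $$ (j,i)"
    proof (intro allI impI)
      fix i j assume i: "i < n" and j: "j < n"
      have "T $$ (j,i) = transpose_mat T $$ (i,j)" using Tc i j by simp
      then show "T $$ (i,j) = T $$ (j,i)" using Tsym by simp
    qed
    have e3: "0 \<le> (\<Sum>i<n. g i * (\<Sum>j<n. T $$ (i,j) * g j))" for g
    proof -
      define x where "x = vec n g"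
      have xc: "x \<in> carrier_vec n" unfolding x_def by simp
      define z where "z = Q *\<^sub>v x"
      have zc: "z \<in> carrier_vec n" unfolding z_def using Qc xc by simp
      have "x \<bullet> (T *\<^sub>v x) = x \<bullet> (transpose_mat Q *\<^sub>v (S *\<^sub>v z))"
      proof -
        have "T = transpose_mat Q * (S * Q)" unfolding T_def using Qc Sc by (simp add: assoc_nn[of _ n])
        then have "T *\<^sub>v x = transpose_mat Q *\<^sub>v ((S * Q) *\<^sub>v x)"
          using assoc_mult_mat_vec[of "transpose_mat Q" n n "S * Q" n x] Qc Sc xc by simp
        also have "(S * Q) *\<^sub>v x = S *\<^sub>v z"
          unfolding z_def using assoc_mult_mat_vec[of S n n Q n x] Qc Sc xc by simp
        finally show ?thesis by simp
      qed
      also have "\<dots> = (transpose_mat Q *\<^sub>v (S *\<^sub>v z)) \<bullet> x"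
        using Qc Sc zc xc by (intro comm_scalar_prod[of _ n]) auto
      also have "\<dots> = (S *\<^sub>v z) \<bullet> z" unfolding z_def
        using Qc Sc zc xc by (intro transpose_vec_mult_scalar) auto
      also have "\<dots> = z \<bullet> (S *\<^sub>v z)"
        using Sc zc by (intro comm_scalar_prod[of _ n]) auto
      finally have "x \<bullet> (T *\<^sub>v x) \<ge> 0" using Spsd zc by simp
      moreover have "x \<bullet> (T *\<^sub>v x) = (\<Sum>i<n. g i * (\<Sum>j<n. T $$ (i,j) * g j))"
        using quad_form[OF Tc xc] unfolding x_def by simp
      ultimately show ?thesis by simp
    qed
    have "T = N"
    proof (rule eq_matI)
      fix i j assume "i < dim_row N" "j < dim_col N"
      then have i: "i < n" and j: "j < n" using Nc by auto
      show "T $$ (i,j) = N $$ (i,j)"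
        using sqrt_scalar[of n "\<lambda>i. \<Lambda> $$ (i,i)" "\<lambda>i j. T $$ (i,j)", OF L0 e1 e2 e3 j i]
        by (simp add: Nij i j)
    qed (use Tc Nc in auto)
    then show ?thesis using ST unfolding S0_def by simp
  qed
  have "psd_sqrt n H = S0" unfolding psd_sqrt_def
  proof (rule the_equality)
    show "psd_mat n S0 \<and> S0 * S0 = H" using S0psd S0S0 by blast
    fix S assume "psd_mat n S \<and> S * S = H"
    then show "S = S0" using uniq by blast
  qed
  then have "mtrace (psd_sqrt n H) = (\<Sum>i<n. S0 $$ (i,i))" unfolding mtrace_def using S0c by simp
  also have "\<dots> = (\<Sum>i<n. \<Sum>k<n. Q $$ (i,k) * N $$ (k,k) * Q $$ (i,k))"
    by (intro sum.cong refl) (simp add: S0e)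
  also have "\<dots> = (\<Sum>k<n. \<Sum>i<n. Q $$ (i,k) * N $$ (k,k) * Q $$ (i,k))"
    by (rule sum.swap)
  also have "\<dots> = (\<Sum>k<n. \<Sum>i<n. N $$ (k,k) * (transpose_mat Q $$ (k,i) * Q $$ (i,k)))"
  proof (rule sum.cong[OF refl], rule sum.cong[OF refl])
    fix k i assume "k \<in> {..<n}" "i \<in> {..<n}"
    then have "transpose_mat Q $$ (k,i) = Q $$ (i,k)" using Qc by simp
    then show "Q $$ (i,k) * N $$ (k,k) * Q $$ (i,k) = N $$ (k,k) * (transpose_mat Q $$ (k,i) * Q $$ (i,k))"
      by (simp only: mult_ac)
  qed
  also have "\<dots> = (\<Sum>k<n. N $$ (k,k) * (\<Sum>i<n. transpose_mat Q $$ (k,i) * Q $$ (i,k)))"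
    by (simp only: sum_distrib_left)
  also have "\<dots> = (\<Sum>k<n. N $$ (k,k) * (transpose_mat Q * Q) $$ (k,k))"
  proof (rule sum.cong[OF refl])
    fix k assume "k \<in> {..<n}"
    then have k: "k < n" by simp
    show "N $$ (k,k) * (\<Sum>i<n. transpose_mat Q $$ (k,i) * Q $$ (i,k)) = N $$ (k,k) * (transpose_mat Q * Q) $$ (k,k)"
      using mm_entry[OF tr_nn[OF Qc] Qc k k] by simp
  qed
  also have "\<dots> = (\<Sum>k<n. sqrt (\<Lambda> $$ (k,k)))"
    by (rule sum.cong[OF refl]) (simp add: QtQ Nij)
  finally show ?thesis .
qed



lemma left_inv_X:
  fixes V L X :: "real mat"
  assumes "V \<in> carrier_mat n n" "L \<in> carrier_mat n n" "X \<in> carrier_mat n k" "V * L = 1\<^sub>m n"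
  shows "V * (L * X) = X"
proof -
  have "V * (L * X) = (V * L) * X" using assms by (intro assoc_mult_mat[symmetric]) auto
  also have "\<dots> = X" using assms by simp
  finally show ?thesis .
qed

theorem lemma2:
  fixes n :: nat and \<mu> :: real and H U D :: "real mat"
  assumes H_psd: "psd_mat n H"
    and H_inc: "incoherent n \<mu> H"
    and U_carrier: "U \<in> carrier_mat n n"
    and U_su: "strictly_upper_triangular U"
    and D_carrier: "D \<in> carrier_mat n n"
    and D_diag: "diagonal_mat D"
    and D_nonneg: "\<forall>i<n. 0 \<le> D $$ (i,i)"
    and LDL: "H = (U + 1\<^sub>m n) * D * transpose_mat (U + 1\<^sub>m n)"
  shows "mtrace D \<le> \<mu>\<^sup>2 / real n * (mtrace (psd_sqrt n H))\<^sup>2"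
proof -
  obtain Q \<Lambda> where Qo: "orthogonal_real_mat n Q" and Lc: "\<Lambda> \<in> carrier_mat n n"
    and Ld: "diagonal_mat \<Lambda>" and HQ: "H = Q * \<Lambda> * transpose_mat Q"
    and Qb: "\<forall>i<n. \<forall>j<n. \<bar>Q $$ (i,j)\<bar> \<le> \<mu> / sqrt (real n)"
    using H_inc unfolding incoherent_def by blast
  have Qc: "Q \<in> carrier_mat n n" and QtQ: "transpose_mat Q * Q = 1\<^sub>m n"
    using Qo unfolding orthogonal_real_mat_def by auto
  have Hc: "H \<in> carrier_mat n n" and Hpsd: "\<forall>x\<in>carrier_vec n. 0 \<le> x \<bullet> (H *\<^sub>v x)"
    using H_psd unfolding psd_mat_def by auto
  have QHQ: "transpose_mat Q * (H * Q) = \<Lambda>"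
  proof -
    have "transpose_mat Q * (H * Q) = transpose_mat Q * (Q * (\<Lambda> * (transpose_mat Q * Q)))"
      unfolding HQ using Qc Lc by (simp add: assoc_nn[of _ n] mult_nn tr_nn)
    also have "\<dots> = \<Lambda>" using Qc Lc QtQ by (simp add: QtQX[OF Qo, of _ n])
    finally show ?thesis .
  qed
  have lam0: "\<forall>i<n. 0 \<le> \<Lambda> $$ (i,i)"
  proof (intro allI impI)
    fix i assume i: "i < n"
    define x where "x = col Q i"
    have xc: "x \<in> carrier_vec n" unfolding x_def carrier_vec_def using Qc by simp
    have xk: "x $ k = Q $$ (k,i)" if "k < n" for k unfolding x_def using Qc that i by simp
    have "\<Lambda> $$ (i,i) = (\<Sum>k<n. transpose_mat Q $$ (i,k) * (H * Q) $$ (k,i))"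
      using mm_entry[OF tr_nn[OF Qc] mult_nn[OF Hc Qc] i i] QHQ by simp
    also have "\<dots> = (\<Sum>k<n. x $ k * (\<Sum>j<n. H $$ (k,j) * x $ j))"
    proof (rule sum.cong[OF refl])
      fix k assume "k \<in> {..<n}"
      then have k: "k < n" by simp
      show "transpose_mat Q $$ (i,k) * (H * Q) $$ (k,i) = x $ k * (\<Sum>j<n. H $$ (k,j) * x $ j)"
        using mm_entry[OF Hc Qc k i] Qc i k by (simp add: xk)
    qed
    also have "\<dots> = x \<bullet> (H *\<^sub>v x)" using quad_form[OF Hc xc] by simp
    finally show "0 \<le> \<Lambda> $$ (i,i)" using Hpsd xc by simp
  qed
  define L where "L = U + 1\<^sub>m n"
  have Lmc: "L \<in> carrier_mat n n" unfolding L_def using U_carrier by simp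
  have Lij: "L $$ (i,j) = U $$ (i,j) + (if i = j then 1 else 0)" if "i < n" "j < n" for i j
    unfolding L_def using U_carrier that by simp
  have Lii: "L $$ (i,i) = 1" if "i < n" for i
    using Lij[OF that that] U_su U_carrier that unfolding strictly_upper_triangular_def by simp
  have Lut: "upper_triangular L"
    unfolding upper_triangular_def using Lmc Lij U_su U_carrier
    unfolding strictly_upper_triangular_def by auto
  have "det L = prod_list (diag_mat L)" by (rule det_upper_triangular[OF Lut Lmc])
  also have "diag_mat L = map (\<lambda>i. 1) [0..<n]"
    unfolding diag_mat_def using Lmc Lii by (intro map_cong) auto
  also have "map (\<lambda>i. 1::real) [0..<n] = replicate n 1" by (simp add: map_replicate_const)
  finally have detL: "det L = 1" by simp
  from det_non_zero_imp_unit[OF Lmc, of undefined] detL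
  have "L \<in> Units (ring_mat TYPE(real) n undefined)" by simp
  then obtain V where Vc: "V \<in> carrier_mat n n" and VL: "V * L = 1\<^sub>m n"
    unfolding Units_def ring_mat_def by auto
  define R where "R = V * Q"
  have Rc: "R \<in> carrier_mat n n" unfolding R_def using Vc Qc by simp
  have HL: "H = L * D * transpose_mat L" unfolding L_def LDL ..
  have LtV: "transpose_mat L * transpose_mat V = 1\<^sub>m n"
  proof -
    have "transpose_mat L * transpose_mat V = transpose_mat (V * L)"
      by (rule transpose_mult[OF Vc Lmc, symmetric])
    then show ?thesis using VL by simp
  qed
  have VH: "V * H = D * transpose_mat L"
  proof -
    have "V * H = V * (L * (D * transpose_mat L))"
      unfolding HL by (simp only: assoc_mult_mat[OF Lmc D_carrier tr_nn[OF Lmc]])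
    also have "\<dots> = D * transpose_mat L"
      by (rule left_inv_X[OF Vc Lmc mult_nn[OF D_carrier tr_nn[OF Lmc]] VL])
    finally show ?thesis .
  qed
  have VH2: "V * H = R * \<Lambda> * transpose_mat Q"
  proof -
    have "R * \<Lambda> * transpose_mat Q = R * (\<Lambda> * transpose_mat Q)"
      by (rule assoc_mult_mat[OF Rc Lc tr_nn[OF Qc]])
    also have "\<dots> = V * (Q * (\<Lambda> * transpose_mat Q))"
      unfolding R_def by (rule assoc_mult_mat[OF Vc Qc mult_nn[OF Lc tr_nn[OF Qc]]])
    also have "Q * (\<Lambda> * transpose_mat Q) = H"
      unfolding HQ by (rule assoc_mult_mat[OF Qc Lc tr_nn[OF Qc], symmetric])
    finally show ?thesis by simp
  qed
  have RLR: "R * \<Lambda> * transpose_mat R = D"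
  proof -
    have RLc: "R * \<Lambda> \<in> carrier_mat n n" using Rc Lc by simp
    have "R * \<Lambda> * transpose_mat R = R * \<Lambda> * (transpose_mat Q * transpose_mat V)"
      unfolding R_def by (simp only: transpose_mult[OF Vc Qc])
    also have "\<dots> = R * \<Lambda> * transpose_mat Q * transpose_mat V"
      by (rule assoc_mult_mat[OF RLc tr_nn[OF Qc] tr_nn[OF Vc], symmetric])
    also have "\<dots> = D * transpose_mat L * transpose_mat V"
      unfolding VH2[symmetric] VH ..
    also have "\<dots> = D * (transpose_mat L * transpose_mat V)"
      by (rule assoc_mult_mat[OF D_carrier tr_nn[OF Lmc] tr_nn[OF Vc]])
    also have "\<dots> = D" using LtV D_carrier by simp
    finally show ?thesis .
  qed
  define lam where "lam j = \<Lambda> $$ (j,j)" for j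
  define d where "d k = D $$ (k,k)" for k
  define r where "r k j = R $$ (k,j)" for k j
  define q where "q k j = Q $$ (k,j)" for k j
  have orth: "\<forall>k<n. \<forall>l<n. (\<Sum>j<n. r k j * lam j * r l j) = (if k = l then d k else 0)"
  proof (intro allI impI)
    fix k l assume k: "k < n" and l: "l < n"
    have "(R * \<Lambda> * transpose_mat R) $$ (k,l) = (\<Sum>j<n. R $$ (k,j) * \<Lambda> $$ (j,j) * transpose_mat R $$ (j,l))"
      by (rule mm_diag_entry[OF Rc Lc tr_nn[OF Rc] k l Ld])
    also have "\<dots> = (\<Sum>j<n. r k j * lam j * r l j)"
      using Rc l by (intro sum.cong refl) (simp add: r_def lam_def)
    finally show "(\<Sum>j<n. r k j * lam j * r l j) = (if k = l then d k else 0)"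
      using RLR D_diag D_carrier k l unfolding diagonal_mat_def d_def by auto
  qed
  have dk: "\<forall>k<n. d k = (\<Sum>j<n. r k j * lam j * q k j)"
  proof (intro allI impI)
    fix k assume k: "k < n"
    have "(V * H) $$ (k,k) = (\<Sum>j<n. R $$ (k,j) * \<Lambda> $$ (j,j) * transpose_mat Q $$ (j,k))"
      unfolding VH2 by (rule mm_diag_entry[OF Rc Lc tr_nn[OF Qc] k k Ld])
    also have "\<dots> = (\<Sum>j<n. r k j * lam j * q k j)"
      using Qc k by (intro sum.cong refl) (simp add: r_def lam_def q_def)
    finally have 1: "(V * H) $$ (k,k) = (\<Sum>j<n. r k j * lam j * q k j)" .
    have "(V * H) $$ (k,k) = (\<Sum>j<n. D $$ (k,j) * transpose_mat L $$ (j,k))"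
      unfolding VH by (rule mm_entry[OF D_carrier tr_nn[OF Lmc] k k])
    also have "\<dots> = (\<Sum>j<n. if j = k then D $$ (k,k) else 0)"
    proof (rule sum.cong[OF refl])
      fix j assume "j \<in> {..<n}"
      then have j: "j < n" by simp
      show "D $$ (k,j) * transpose_mat L $$ (j,k) = (if j = k then D $$ (k,k) else 0)"
        using D_diag D_carrier Lmc Lii k j unfolding diagonal_mat_def by auto
    qed
    also have "\<dots> = d k" using k by (simp add: d_def)
    finally show "d k = (\<Sum>j<n. r k j * lam j * q k j)" using 1 by simp
  qed
  have key: "(\<Sum>k<n. d k) \<le> (\<mu> / sqrt (real n))\<^sup>2 * (\<Sum>j<n. sqrt (lam j))\<^sup>2"
    by (rule key_scalar[of n lam d r q]) (use lam0 D_nonneg orth dk Qb in \<open>auto simp: lam_def d_def q_def\<close>)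
  have tr: "mtrace (psd_sqrt n H) = (\<Sum>j<n. sqrt (lam j))"
    unfolding lam_def by (rule psd_sqrt_trace[OF Qo Lc Ld lam0 HQ])
  have trD: "mtrace D = (\<Sum>k<n. d k)" unfolding mtrace_def d_def using D_carrier by simp
  have c2: "(\<mu> / sqrt (real n))\<^sup>2 = \<mu>\<^sup>2 / real n" by (simp add: power_divide)
  show ?thesis using key unfolding tr trD c2 .
qed

end
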